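(* For every dynamical system $(S,g)$, the following are equivalent: (1) $(S,g)$ is timed; (2) for every $n\in\mathbb{N}\cup\{\infty\}$ and all $s,w\in S$, if $g(s)=g^{n+1}(w)$ then $s=g^n(w')$ for some $w'\in S$; (3) all maximal $g$-histories of the same state have the same length; (4) there exists an equivalence relation $=^\tau$ on $S$ satisfying the two synchronicity conditions: (i) $s=^\tau w$ iff $g(s)=^\tau g(w)$, and (ii) if $s=^\tau g(w)$ then $s=g(w')$ for some $w'\in S$.
   Context: A dynamical system is a pair $(S,g)$ with $g:S\to S$. A state $s$ is initial if $s\neq g(w)$ for all $w\in S$. A timing map is $\tau:S\to\mathbb{N}\cup\{\infty\}$ with (a) $\tau_s=0$ for every initial state $s$ and (b) $\tau_{g(s)}=\tau_s+1$ for all $s$ (with $\infty+1=\infty$); $(S,g)$ is timed if a timing map exists. A $g$-history of a state $s$ is a finite or infinite sequence $(s_0=s,s_1,s_2,\dots)$ with $s_n=g(s_{n+1})$ for all consecutive entries; its length is the number of states in it; it is maximal if it is infinite or cannot be extended to a $g$-history of greater length. *)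

theory Defs
  imports Main "HOL-Library.Extended_Nat"
begin

text \<open>A dynamical system is modelled by a map g :: 'a \<Rightarrow> 'a; the state space S is UNIV :: 'a set.\<close>

definition initial :: "('a \<Rightarrow> 'a) \<Rightarrow> 'a \<Rightarrow> bool" where
  "initial g s \<longleftrightarrow> (\<forall>w. s \<noteq> g w)"

definition timing_map :: "('a \<Rightarrow> 'a) \<Rightarrow> ('a \<Rightarrow> enat) \<Rightarrow> bool" where
  "timing_map g \<tau> \<longleftrightarrow> (\<forall>s. initial g s \<longrightarrow> \<tau> s = 0) \<and> (\<forall>s. \<tau> (g s) = \<tau> s + 1)"

definition timed :: "('a \<Rightarrow> 'a) \<Rightarrow> bool" where
  "timed g \<longleftrightarrow> (\<exists>\<tau>. timing_map g \<tau>)"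

text \<open>A g-history of s of length L (number of states, 1 \<le> L \<le> \<infinity>), given by the entries
  h 0, h 1, ... (only the entries h k with k < L are meaningful).\<close>
definition g_history :: "('a \<Rightarrow> 'a) \<Rightarrow> 'a \<Rightarrow> (nat \<Rightarrow> 'a) \<Rightarrow> enat \<Rightarrow> bool" where
  "g_history g s h L \<longleftrightarrow> 1 \<le> L \<and> h 0 = s \<and> (\<forall>k. enat (Suc k) < L \<longrightarrow> h k = g (h (Suc k)))"

definition maximal_history :: "('a \<Rightarrow> 'a) \<Rightarrow> 'a \<Rightarrow> (nat \<Rightarrow> 'a) \<Rightarrow> enat \<Rightarrow> bool" where
  "maximal_history g s h L \<longleftrightarrow> g_history g s h L \<and>
     (L = \<infinity> \<or> \<not> (\<exists>h' L'. g_history g s h' L' \<and> L < L' \<and> (\<forall>k. enat k < L \<longrightarrow> h' k = h k)))"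

text \<open>For n = \<infinity>,
  "x = g^\<infinity>(w)" is read as: x has an infinite g-history (the argument w plays no role).\<close>
definition gpow_eq :: "('a \<Rightarrow> 'a) \<Rightarrow> enat \<Rightarrow> 'a \<Rightarrow> 'a \<Rightarrow> bool" where
  "gpow_eq g n x w \<longleftrightarrow> (case n of
      enat m \<Rightarrow> x = (g ^^ m) w
    | \<infinity> \<Rightarrow> (\<exists>h. g_history g x h \<infinity>))"

end

theory Submission
  imports Defs
begin

lemma hist_pow:
  assumes "g_history g s h L" "enat k < L"
  shows "s = (g ^^ k) (h k)"
  using assms
proof (induction k)
  case 0 then show ?case by (simp add: g_history_def)
next
  case (Suc k)
  have "enat k < L" using Suc.prems(2) by (cases L) auto
  then have "s = (g ^^ k) (h k)" using Suc by blast
  moreover have "h k = g (h (Suc k))" using Suc.prems unfolding g_history_def by blast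
  moreover have "(g ^^ Suc k) (h (Suc k)) = (g ^^ k) (g (h (Suc k)))" by (simp only: funpow_Suc_right o_apply)
  ultimately show ?case by simp
qed

lemma tau_pow:
  assumes "timing_map g \<tau>"
  shows "\<tau> ((g ^^ k) w) = \<tau> w + enat k"
proof (induction k)
  case 0 then show ?case by (simp add: zero_enat_def)
next
  case (Suc k)
  have "\<tau> ((g ^^ Suc k) w) = \<tau> ((g ^^ k) w) + 1" using assms unfolding timing_map_def by simp
  also have "\<dots> = \<tau> w + enat (Suc k)" using Suc by (simp add: add.assoc one_enat_def)
  finally show ?case .
qed

lemma tau_hist:
  assumes "timing_map g \<tau>" "g_history g s h L" "enat k < L"
  shows "\<tau> s = \<tau> (h k) + enat k"
  using hist_pow[OF assms(2,3)] tau_pow[OF assms(1)] by simp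

lemma tau_inf:
  assumes "timing_map g \<tau>" "g_history g s h \<infinity>"
  shows "\<tau> s = \<infinity>"
proof (cases "\<tau> s")
  case (enat m)
  have "\<tau> s = \<tau> (h (Suc m)) + enat (Suc m)" using tau_hist[OF assms] by simp
  then have "enat (Suc m) \<le> \<tau> s" by simp
  then show ?thesis using enat by simp
qed simp

lemma max_fin:
  assumes "maximal_history g s h (enat L)"
  shows "\<exists>m. L = Suc m \<and> initial g (h m)"
proof -
  have gh: "g_history g s h (enat L)" using assms unfolding maximal_history_def by blast
  then have "L \<ge> 1" unfolding g_history_def by (simp add: one_enat_def)
  then obtain m where m: "L = Suc m" by (cases L) auto
  have "initial g (h m)"
  proof (rule ccontr)
    assume "\<not> initial g (h m)"
    then obtain x where x: "h m = g x" unfolding initial_def by blast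
    define h' where "h' = h(Suc m := x)"
    have "g_history g s h' (enat (Suc (Suc m)))"
      using gh x unfolding g_history_def h'_def m
      by (auto simp: one_enat_def less_Suc_eq)
    moreover have "\<forall>k. enat k < enat L \<longrightarrow> h' k = h k" unfolding h'_def m by auto
    ultimately show False using assms unfolding maximal_history_def m by fastforce
  qed
  then show ?thesis using m by blast
qed

lemma fin_max:
  assumes "g_history g s h (enat (Suc m))" "initial g (h m)"
  shows "maximal_history g s h (enat (Suc m))"
  unfolding maximal_history_def
proof (intro conjI disjI2 notI)
  show "g_history g s h (enat (Suc m))" by fact
  assume "\<exists>h' L'. g_history g s h' L' \<and> enat (Suc m) < L' \<and> (\<forall>k. enat k < enat (Suc m) \<longrightarrow> h' k = h k)"
  then obtain h' L' where h': "g_history g s h' L'" "enat (Suc m) < L'" "\<forall>k. enat k < enat (Suc m) \<longrightarrow> h' k = h k"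
    by blast
  have "h' m = h m" using h'(3) by simp
  moreover have "h' m = g (h' (Suc m))" using h'(1,2) unfolding g_history_def by blast
  ultimately show False using assms(2) unfolding initial_def by metis
qed

lemma exists_max:
  "\<exists>h L. maximal_history g s h L"
proof (cases "\<exists>k i. initial g i \<and> s = (g ^^ k) i")
  case True
  then obtain k i where ki: "initial g i" "s = (g ^^ k) i" by blast
  define h where "h = (\<lambda>j. (g ^^ (k - j)) i)"
  have st: "(g ^^ (k - j)) i = g ((g ^^ (k - Suc j)) i)" if "j < k" for j
  proof -
    have "k - j = Suc (k - Suc j)" using that by simp
    then show ?thesis by simp
  qed
  have "g_history g s h (enat (Suc k))"
    unfolding g_history_def h_def using ki st
    by (auto simp: one_enat_def)
  moreover have "initial g (h k)" using ki by (simp add: h_def)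
  ultimately have "maximal_history g s h (enat (Suc k))" by (rule fin_max)
  then show ?thesis by blast
next
  case False
  define P where "P = (\<lambda>x. \<not> (\<exists>k i. initial g i \<and> x = (g ^^ k) i))"
  have step: "\<exists>y. x = g y \<and> P y" if "P x" for x
  proof -
    have "\<not> initial g x" using that unfolding P_def by (metis funpow_0)
    then obtain y where y: "x = g y" unfolding initial_def by blast
    have "P y"
    proof (rule ccontr)
      assume "\<not> P y"
      then obtain k i where "initial g i" "y = (g ^^ k) i" unfolding P_def by blast
      then have "initial g i \<and> x = (g ^^ Suc k) i" using y by simp
      then show False using that unfolding P_def by blast
    qed
    then show ?thesis using y by blast
  qed
  define f where "f = (\<lambda>x. SOME y. x = g y \<and> P y)"
  define h where "h = (\<lambda>k. (f ^^ k) s)"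
  have Ph: "P (h k)" for k
  proof (induction k)
    case 0 then show ?case using False by (simp add: h_def P_def)
  next
    case (Suc k)
    have "h (Suc k) = f (h k)" by (simp add: h_def)
    moreover have "P (f (h k))" using someI_ex[OF step[OF Suc]] by (simp add: f_def)
    ultimately show ?case by simp
  qed
  have "h k = g (f (h k))" for k
    using someI_ex[OF step[OF Ph[of k]]] by (simp add: f_def)
  then have "h k = g (h (Suc k))" for k by (simp add: h_def)
  then have "g_history g s h \<infinity>" unfolding g_history_def by (simp add: h_def)
  then have "maximal_history g s h \<infinity>" unfolding maximal_history_def by blast
  then show ?thesis by blast
qed

lemma max_len_tau:
  assumes "timing_map g \<tau>" "maximal_history g s h L"
  shows "L = \<tau> s + 1"
proof (cases L)
  case (enat n)
  then obtain m where m: "n = Suc m" "initial g (h m)" using max_fin[of g s h n] assms(2) by auto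
  have gh: "g_history g s h L" using assms(2) unfolding maximal_history_def by blast
  have "\<tau> s = \<tau> (h m) + enat m" using tau_hist[OF assms(1) gh] enat m by simp
  also have "\<tau> (h m) = 0" using assms(1) m(2) unfolding timing_map_def by blast
  finally show ?thesis using enat m by (simp add: one_enat_def)
next
  case infinity
  then show ?thesis using tau_inf[OF assms(1)] assms(2) unfolding maximal_history_def by simp
qed

definition C2fin :: "('a \<Rightarrow> 'a) \<Rightarrow> bool" where
  "C2fin g \<longleftrightarrow> (\<forall>m s w. g s = (g ^^ Suc m) w \<longrightarrow> (\<exists>w'. s = (g ^^ m) w'))"

lemma C2fin_init:
  assumes "C2fin g" "initial g i"
  shows "(g ^^ k) i \<noteq> (g ^^ Suc k) y"
  using assms(2)
proof (induction k arbitrary: y)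
  case 0 then show ?case unfolding initial_def by simp
next
  case (Suc k)
  show ?case
  proof
    assume "(g ^^ Suc k) i = (g ^^ Suc (Suc k)) y"
    then have "g ((g ^^ k) i) = (g ^^ Suc (Suc k)) y" by simp
    then obtain w' where "(g ^^ k) i = (g ^^ Suc k) w'" using assms(1) unfolding C2fin_def by blast
    then show False using Suc by blast
  qed
qed

lemma C2fin_less:
  assumes "C2fin g" "maximal_history g s h1 L1" "g_history g s h2 L2" "L1 < L2"
  shows False
proof -
  obtain n where n: "L1 = enat n" using assms(4) by (cases L1) auto
  then obtain m where m: "n = Suc m" "initial g (h1 m)" using max_fin[of g s h1 n] assms(2) by auto
  have gh: "g_history g s h1 L1" using assms(2) unfolding maximal_history_def by blast
  have "s = (g ^^ m) (h1 m)" using hist_pow[OF gh] n m by simp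
  moreover have "s = (g ^^ Suc m) (h2 (Suc m))" using hist_pow[OF assms(3)] assms(4) n m by simp
  ultimately show False using C2fin_init[OF assms(1) m(2)] by metis
qed

lemma C2fin_C3:
  assumes "C2fin g" "maximal_history g s h1 L1" "maximal_history g s h2 L2"
  shows "L1 = L2"
proof -
  have "\<not> L1 < L2" using C2fin_less[OF assms(1,2)] assms(3) unfolding maximal_history_def by blast
  moreover have "\<not> L2 < L1" using C2fin_less[OF assms(1,3)] assms(2) unfolding maximal_history_def by blast
  ultimately show ?thesis by simp
qed

lemma C3_timed:
  assumes C3: "\<forall>s h1 L1 h2 L2. maximal_history g s h1 L1 \<and> maximal_history g s h2 L2 \<longrightarrow> L1 = L2"
  shows "timed g"
proof -
  define Lf where "Lf = (\<lambda>s. SOME L. \<exists>h. maximal_history g s h L)"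
  have Lf: "maximal_history g s h L \<Longrightarrow> Lf s = L" for s h L
  proof -
    assume a: "maximal_history g s h L"
    have "\<exists>h. maximal_history g s h (Lf s)" unfolding Lf_def by (rule someI_ex) (use exists_max[of g s] in blast)
    then show "Lf s = L" using C3 a by blast
  qed
  have ext: "maximal_history g (g s) (\<lambda>k. if k = 0 then g s else h (k - 1)) (L + 1)"
    if a: "maximal_history g s h L" for s h L
  proof -
    have gh: "g_history g s h L" using a unfolding maximal_history_def by blast
    have gh2: "g_history g (g s) (\<lambda>k. if k = 0 then g s else h (k - 1)) (L + 1)"
      unfolding g_history_def
    proof (intro conjI allI impI)
      show "1 \<le> L + 1" by simp
      show "(if 0 = 0 then g s else h (0 - 1)) = g s" by simp
      fix k assume k: "enat (Suc k) < L + 1"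
      show "(if k = 0 then g s else h (k - 1)) = g (if Suc k = 0 then g s else h (Suc k - 1))"
      proof (cases k)
        case 0 then show ?thesis using gh by (simp add: g_history_def)
      next
        case (Suc j)
        have "enat (Suc j) < L" using k Suc
          by (cases L) (auto simp: one_enat_def)
        then show ?thesis using gh Suc unfolding g_history_def by simp
      qed
    qed
    show ?thesis
    proof (cases L)
      case (enat n)
      then obtain m where m: "n = Suc m" "initial g (h m)" using max_fin[of g s h n] a by auto
      have "L + 1 = enat (Suc (Suc m))" using enat m by (simp add: one_enat_def)
      then show ?thesis using fin_max[of g "g s" _ "Suc m"] gh2 m by simp
    next
      case infinity
      then show ?thesis using gh2 unfolding maximal_history_def by simp
    qed
  qed
  define \<tau> where "\<tau> = (\<lambda>s. Lf s - 1)"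
  have "timing_map g \<tau>"
    unfolding timing_map_def
  proof (intro conjI allI impI)
    fix s assume "initial g s"
    then have "maximal_history g s (\<lambda>_. s) (enat (Suc 0))"
      by (intro fin_max) (auto simp: g_history_def one_enat_def)
    then show "\<tau> s = 0" using Lf unfolding \<tau>_def by (simp add: one_enat_def zero_enat_def)
  next
    fix s
    obtain h L where a: "maximal_history g s h L" using exists_max[of g s] by blast
    have "L \<ge> 1" using a unfolding maximal_history_def g_history_def by blast
    have "Lf (g s) = L + 1" using Lf[OF ext[OF a]] .
    moreover have "Lf s = L" using Lf[OF a] .
    ultimately show "\<tau> (g s) = \<tau> s + 1" unfolding \<tau>_def using \<open>L \<ge> 1\<close>
      by (cases L) (auto simp: one_enat_def)
  qed
  then show ?thesis unfolding timed_def by blast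
qed

lemma timed_C2:
  assumes "timing_map g \<tau>" "gpow_eq g (n + 1) (g s) w"
  shows "\<exists>w'. gpow_eq g n s w'"
proof (cases n)
  case (enat m)
  have e: "g s = (g ^^ Suc m) w" using assms(2) enat by (simp add: gpow_eq_def one_enat_def)
  obtain h L where a: "maximal_history g s h L" using exists_max[of g s] by blast
  have gh: "g_history g s h L" using a unfolding maximal_history_def by blast
  have "enat m < L"
  proof (cases L)
    case (enat n)
    then obtain j where j: "n = Suc j" "initial g (h j)" using max_fin[of g s h n] a by auto
    have "L = \<tau> s + 1" using max_len_tau[OF assms(1) a] .
    moreover have "\<tau> (g s) = \<tau> s + 1" using assms(1) unfolding timing_map_def by blast
    moreover have "\<tau> (g s) = \<tau> w + enat (Suc m)" by (metis e tau_pow[OF assms(1)])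
    ultimately have "enat (Suc j) = \<tau> w + enat (Suc m)" using enat j by simp
    then show ?thesis using enat j by (cases "\<tau> w") auto
  qed simp
  then have "s = (g ^^ m) (h m)" using hist_pow[OF gh] by simp
  then show ?thesis using enat by (auto simp: gpow_eq_def)
next
  case infinity
  then obtain h where h: "g_history g (g s) h \<infinity>" using assms(2) by (auto simp: gpow_eq_def)
  have "\<tau> (g s) = \<infinity>" using tau_inf[OF assms(1) h] .
  moreover have "\<tau> (g s) = \<tau> s + 1" using assms(1) unfolding timing_map_def by blast
  ultimately have ts: "\<tau> s = \<infinity>" by (cases "\<tau> s") (auto simp: one_enat_def)
  obtain h L where a: "maximal_history g s h L" using exists_max[of g s] by blast
  have "L = \<infinity>" using max_len_tau[OF assms(1) a] ts by simp
  then show ?thesis using a infinity unfolding maximal_history_def gpow_eq_def by auto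
qed

lemma C4_C2fin:
  assumes "equiv UNIV R" "\<forall>s w. (s, w) \<in> R \<longleftrightarrow> (g s, g w) \<in> R"
    "\<forall>s w. (s, g w) \<in> R \<longrightarrow> (\<exists>w'. s = g w')"
  shows "C2fin g"
proof -
  have key: "(s, (g ^^ n) w) \<in> R \<Longrightarrow> \<exists>w'. s = (g ^^ n) w'" for n s w
  proof (induction n arbitrary: s)
    case 0 then show ?case by auto
  next
    case (Suc n)
    then have "(s, g ((g ^^ n) w)) \<in> R" by simp
    then obtain v where v: "s = g v" using assms(3) by blast
    then have "(v, (g ^^ n) w) \<in> R" using Suc.prems assms(2) by simp
    then obtain w' where "v = (g ^^ n) w'" using Suc.IH by blast
    then have "s = (g ^^ Suc n) w'" using v by simp
    then show ?case by blast
  qed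
  show ?thesis unfolding C2fin_def
  proof (intro allI impI)
    fix m s w assume "g s = (g ^^ Suc m) w"
    then have "(g s, g ((g ^^ m) w)) \<in> R" using assms(1) unfolding equiv_def refl_on_def by simp
    then have "(s, (g ^^ m) w) \<in> R" using assms(2) by blast
    then show "\<exists>w'. s = (g ^^ m) w'" using key by blast
  qed
qed

lemma timed_C4:
  assumes "timing_map g \<tau>"
  shows "\<exists>R. equiv UNIV R \<and>
                  (\<forall>s w. (s, w) \<in> R \<longleftrightarrow> (g s, g w) \<in> R) \<and>
                  (\<forall>s w. (s, g w) \<in> R \<longrightarrow> (\<exists>w'. s = g w'))"
proof -
  let ?R = "{(s, w). \<tau> s = \<tau> w}"
  have A: "equiv UNIV ?R" unfolding equiv_def refl_on_def sym_def trans_def by auto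
  have t: "\<tau> (g x) = \<tau> x + 1" for x using assms unfolding timing_map_def by blast
  have B: "((s, w) \<in> ?R) = ((g s, g w) \<in> ?R)" for s w using t
    by (cases "\<tau> s"; cases "\<tau> w") (auto simp: one_enat_def)
  have C: "\<exists>w'. s = g w'" if "(s, g w) \<in> ?R" for s w
  proof -
    have "\<tau> s = \<tau> w + 1" using t that by simp
    then have "\<not> initial g s" using assms unfolding timing_map_def by auto
    then show "\<exists>w'. s = g w'" unfolding initial_def by blast
  qed
  show ?thesis using A B C by blast
qed

theorem fact5p2:
  fixes g :: "'a \<Rightarrow> 'a"
  defines "C2 \<equiv> (\<forall>(n::enat) s w. gpow_eq g (n + 1) (g s) w \<longrightarrow> (\<exists>w'. gpow_eq g n s w'))"
      and "C3 \<equiv> (\<forall>s h1 L1 h2 L2. maximal_history g s h1 L1 \<and> maximal_history g s h2 L2 \<longrightarrow> L1 = L2)"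
      and "C4 \<equiv> (\<exists>R. equiv UNIV R \<and>
                  (\<forall>s w. (s, w) \<in> R \<longleftrightarrow> (g s, g w) \<in> R) \<and>
                  (\<forall>s w. (s, g w) \<in> R \<longrightarrow> (\<exists>w'. s = g w')))"
  shows "(timed g \<longleftrightarrow> C2) \<and> (timed g \<longleftrightarrow> C3) \<and> (timed g \<longleftrightarrow> C4)"
proof -
  have TC2: "timed g \<Longrightarrow> C2" unfolding C2_def timed_def
  proof (intro allI impI)
    fix n s w assume "\<exists>\<tau>. timing_map g \<tau>" "gpow_eq g (n + 1) (g s) w"
    then obtain \<tau> where "timing_map g \<tau>" "gpow_eq g (n + 1) (g s) w" by blast
    then show "\<exists>w'. gpow_eq g n s w'" by (rule timed_C2)
  qed
  have C2fin: "C2 \<Longrightarrow> C2fin g" unfolding C2_def C2fin_def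
  proof (intro allI impI)
    fix m s w assume a: "\<forall>(n::enat) s w. gpow_eq g (n + 1) (g s) w \<longrightarrow> (\<exists>w'. gpow_eq g n s w')"
      and e: "g s = (g ^^ Suc m) w"
    have "gpow_eq g (enat m + 1) (g s) w" using e by (simp add: gpow_eq_def one_enat_def)
    then obtain w' where "gpow_eq g (enat m) s w'" using a by blast
    then show "\<exists>w'. s = (g ^^ m) w'" by (auto simp: gpow_eq_def)
  qed
  have C2fC3: "C2fin g \<Longrightarrow> C3" unfolding C3_def
  proof (intro allI impI)
    fix s h1 L1 h2 L2 assume "C2fin g" "maximal_history g s h1 L1 \<and> maximal_history g s h2 L2"
    then show "L1 = L2" using C2fin_C3[of g s h1 L1 h2 L2] by blast
  qed
  have C3T: "C3 \<Longrightarrow> timed g" unfolding C3_def by (rule C3_timed)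
  have TC4: "timed g \<Longrightarrow> C4" unfolding C4_def timed_def using timed_C4 by blast
  have C4f: "C4 \<Longrightarrow> C2fin g" unfolding C4_def using C4_C2fin by blast
  show ?thesis using TC2 C2fin C2fC3 C3T TC4 C4f by blast
qed

end
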